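(* Let $T$ be a tree of order $n>1$ rooted at a vertex $v$, and let $l\ne v$ be a leaf of $T$. Then the number of subtrees of $T$ containing both $v$ and $l$ is at most $2^{n-2}$, with equality if and only if $T$ is the star $S_n$ and $v$ is its center (i.e. $v$ is adjacent to every other vertex of $T$).
   Context: A subtree of a tree $T$ is a connected subgraph of $T$, determined by its nonempty vertex set. A leaf is a vertex of degree $1$. The star $S_n$ consists of a central vertex adjacent to $n-1$ leaves. *)

theory Defs
  imports Main
begin

definition simple_graph :: "'a set \<Rightarrow> 'a set set \<Rightarrow> bool" where
  "simple_graph V E \<longleftrightarrow> finite V \<and>
     (\<forall>e\<in>E. \<exists>u w. e = {u, w} \<and> u \<noteq> w \<and> u \<in> V \<and> w \<in> V)"

definition connected_on :: "'a set set \<Rightarrow> 'a set \<Rightarrow> bool" where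
  "connected_on E S \<longleftrightarrow> S \<noteq> {} \<and>
     (\<forall>u\<in>S. \<forall>w\<in>S. (\<lambda>x y. x \<in> S \<and> y \<in> S \<and> {x, y} \<in> E)\<^sup>*\<^sup>* u w)"

definition is_cycle :: "'a set set \<Rightarrow> 'a list \<Rightarrow> bool" where
  "is_cycle E cs \<longleftrightarrow> length cs \<ge> 3 \<and> distinct cs \<and>
     (\<forall>i < length cs. {cs ! i, cs ! ((i + 1) mod length cs)} \<in> E)"

definition is_tree :: "'a set \<Rightarrow> 'a set set \<Rightarrow> bool" where
  "is_tree V E \<longleftrightarrow> simple_graph V E \<and> connected_on E V \<and> \<not> (\<exists>cs. is_cycle E cs)"

definition degree :: "'a set set \<Rightarrow> 'a \<Rightarrow> nat" where
  "degree E v = card {u. {u, v} \<in> E}"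

definition is_leaf :: "'a set set \<Rightarrow> 'a \<Rightarrow> bool" where
  "is_leaf E v \<longleftrightarrow> degree E v = 1"

definition subtrees :: "'a set \<Rightarrow> 'a set set \<Rightarrow> 'a set set" where
  "subtrees V E = {S. S \<subseteq> V \<and> connected_on E S}"

end

theory Submission
  imports Defs
begin

lemma conn_step:
  assumes "simple_graph V E" "connected_on E S" "u\<in>S" "w\<in>S" "u\<noteq>w"
  shows "\<exists>y\<in>S. y\<noteq>u \<and> {u,y}\<in>E"
proof -
  from assms(2-4) have "(\<lambda>x y. x\<in>S \<and> y\<in>S \<and> {x,y}\<in>E)\<^sup>*\<^sup>* u w"
    by (auto simp: connected_on_def)
  then show ?thesis
  proof (cases rule: converse_rtranclpE)
    case base with assms(5) show ?thesis by simp
  next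
    case (step y)
    then have e: "{u,y}\<in>E" "y\<in>S" by auto
    moreover have "y\<noteq>u"
    proof
      assume "y = u"
      with e assms(1) obtain a b where "{u} = {a,b}" "a\<noteq>b"
        unfolding simple_graph_def by fastforce
      then show False by (metis insert_iff singletonD)
    qed
    ultimately show ?thesis by blast
  qed
qed

lemma star_conn:
  assumes star: "\<forall>u\<in>V. u \<noteq> v \<longrightarrow> {u, v} \<in> E" and sub: "S \<subseteq> V" and vS: "v \<in> S"
  shows "connected_on E S"
proof -
  let ?R = "\<lambda>x y. x\<in>S \<and> y\<in>S \<and> {x,y}\<in>E"
  have tov: "?R\<^sup>*\<^sup>* u v" if "u \<in> S" for u
  proof (cases "u = v")
    case False
    then have "{u,v}\<in>E" using star sub that by auto
    then show ?thesis using that vS by (auto intro: r_into_rtranclp)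
  qed simp
  have fromv: "?R\<^sup>*\<^sup>* v u" if "u \<in> S" for u
  proof (cases "u = v")
    case False
    then have "{v,u}\<in>E" using star sub that by (auto simp: insert_commute)
    then show ?thesis using that vS by (auto intro: r_into_rtranclp)
  qed simp
  show ?thesis unfolding connected_on_def
    using vS tov fromv by (meson empty_iff rtranclp_trans)
qed

theorem mainTheorem12:
  fixes V :: "'a set" and E :: "'a set set" and v l :: 'a and n :: nat
  assumes "is_tree V E" and "card V = n" and "n > 1"
    and "v \<in> V" and "l \<in> V" and "l \<noteq> v" and "is_leaf E l"
  shows "card {S \<in> subtrees V E. v \<in> S \<and> l \<in> S} \<le> 2 ^ (n - 2) \<and>
         (card {S \<in> subtrees V E. v \<in> S \<and> l \<in> S} = 2 ^ (n - 2) \<longleftrightarrow>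
            (\<forall>u\<in>V. u \<noteq> v \<longrightarrow> {u, v} \<in> E))"
proof -
  define C where "C = {S \<in> subtrees V E. v \<in> S \<and> l \<in> S}"
  define f where "f = (\<lambda>S::'a set. S - {v,l})"
  have sg: "simple_graph V E" using assms(1) by (simp add: is_tree_def)
  have fin: "finite V" using sg by (simp add: simple_graph_def)
  have inj: "inj_on f C"
  proof (rule inj_onI)
    fix S T assume "S \<in> C" "T \<in> C" "f S = f T"
    then have "S = f S \<union> {v,l}" "T = f T \<union> {v,l}" by (auto simp: C_def f_def)
    then show "S = T" using \<open>f S = f T\<close> by simp
  qed
  have img: "f ` C \<subseteq> Pow (V - {v,l})" by (auto simp: C_def f_def subtrees_def)
  have cardP: "card (Pow (V - {v,l})) = 2 ^ (n - 2)"
  proof -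
    have "card (V - {v,l}) = n - 2"
      using assms(2,4,5,6) fin by (simp add: card_Diff_subset)
    then show ?thesis using fin by (simp add: card_Pow)
  qed
  have finP: "finite (Pow (V - {v,l}))" using fin by simp
  have cC: "card C = card (f ` C)" using inj by (simp add: card_image)
  have le: "card C \<le> 2 ^ (n - 2)"
    using cC card_mono[OF finP img] cardP by simp
  have eq: "card C = 2 ^ (n - 2) \<longleftrightarrow> (\<forall>u\<in>V. u \<noteq> v \<longrightarrow> {u, v} \<in> E)"
  proof
    assume h: "card C = 2 ^ (n - 2)"
    have fe: "f ` C = Pow (V - {v,l})"
      using card_subset_eq[OF finP img] h cC cardP by simp
    have key: "connected_on E (insert v (insert l A))" if "A \<subseteq> V - {v,l}" for A
    proof -
      from that fe obtain S where S: "S \<in> C" "f S = A" by (metis PowI imageE)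
      then have "S = insert v (insert l A)" by (auto simp: C_def f_def)
      then show ?thesis using S by (simp add: C_def subtrees_def)
    qed
    have lv: "{l,v} \<in> E"
    proof -
      have "connected_on E {v,l}" using key[of "{}"] by simp
      from conn_step[OF sg this, of l v] assms(6) obtain y where
        "y \<in> {v,l}" "y \<noteq> l" "{l,y} \<in> E" by auto
      then show ?thesis by auto
    qed
    show "\<forall>u\<in>V. u \<noteq> v \<longrightarrow> {u, v} \<in> E"
    proof (intro ballI impI)
      fix u assume u: "u \<in> V" "u \<noteq> v"
      show "{u,v} \<in> E"
      proof (cases "u = l")
        case True then show ?thesis using lv by simp
      next
        case False
        have "connected_on E (insert v (insert l {u}))" using key[of "{u}"] u False by auto
        from conn_step[OF sg this, of u v] u obtain y where
          y: "y \<in> {v,l,u}" "y \<noteq> u" "{u,y} \<in> E" by auto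
        show ?thesis
        proof (cases "y = v")
          case True then show ?thesis using y by simp
        next
          case False
          then have "y = l" using y by auto
          then have "{u,l} \<in> E" using y by simp
          have "{u, v} \<subseteq> {x. {x,l} \<in> E}" using \<open>{u,l}\<in>E\<close> lv by (auto simp: insert_commute)
          moreover have "card {x. {x,l} \<in> E} = 1" using assms(7) by (simp add: is_leaf_def degree_def)
          ultimately have False using u
            by (metis card_1_singletonE insert_subset singletonD)
          then show ?thesis ..
        qed
      qed
    qed
  next
    assume star: "\<forall>u\<in>V. u \<noteq> v \<longrightarrow> {u, v} \<in> E"
    have "Pow (V - {v,l}) \<subseteq> f ` C"
    proof
      fix A assume "A \<in> Pow (V - {v,l})"
      then have A: "A \<subseteq> V - {v,l}" by simp
      let ?S = "insert v (insert l A)"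
      have "?S \<in> C" using star_conn[OF star, of ?S] A assms(4,5)
        by (auto simp: C_def subtrees_def)
      moreover have "f ?S = A" using A by (auto simp: f_def)
      ultimately show "A \<in> f ` C" by (metis imageI)
    qed
    then have "f ` C = Pow (V - {v,l})" using img by blast
    then show "card C = 2 ^ (n - 2)" using cC cardP by simp
  qed
  show ?thesis using le eq by (simp add: C_def)
qed

end
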